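(* Let $\mathcal{D}$ be a $2$-$(|\mathcal{P}|,r+1,\lambda)$ design with point set $\mathcal{P}$, where $r>1$, admitting a group $G$ of automorphisms that is 2-transitive on points and transitive on blocks. Then there is at most one feasible $G$-orbit on the set of flags of $\mathcal{D}$.
   Context: Designs have no repeated blocks; blocks are identified with their point sets. A flag is a pair $(\sigma,L)$ with $\sigma$ a point and $L$ a block containing $\sigma$. For a $G$-orbit $\Omega$ on flags and a point $\sigma$, $\Omega(\sigma)$ is the set of flags of $\Omega$ with point-entry $\sigma$. $\Omega$ is feasible if $|\Omega(\sigma)|\ge 2$ for some (hence all) point $\sigma$, and for some (hence all) flag $(\sigma,L)\in\Omega$ the setwise stabilizer $G_{\sigma,L}$ of $L$ in $G_\sigma$ is transitive on $L\setminus\{\sigma\}$. *)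

theory Defs
  imports "HOL-Algebra.Bij"
begin

text \<open>A 2-(v,k,lambda) design with point set P and block set B (blocks are point sets,
so there are no repeated blocks).\<close>
definition two_design :: "'a set \<Rightarrow> 'a set set \<Rightarrow> nat \<Rightarrow> nat \<Rightarrow> bool" where
  "two_design P B k lam \<longleftrightarrow>
     finite P \<and> (\<forall>L\<in>B. L \<subseteq> P \<and> card L = k) \<and> lam > 0 \<and>
     (\<forall>x\<in>P. \<forall>y\<in>P. x \<noteq> y \<longrightarrow> card {L\<in>B. x \<in> L \<and> y \<in> L} = lam)"

definition aut_group :: "'a set \<Rightarrow> 'a set set \<Rightarrow> ('a \<Rightarrow> 'a) set \<Rightarrow> bool" where
  "aut_group P B G \<longleftrightarrow> subgroup G (BijGroup P) \<and> (\<forall>g\<in>G. (\<lambda>L. g ` L) ` B = B)"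

definition two_transitive :: "'a set \<Rightarrow> ('a \<Rightarrow> 'a) set \<Rightarrow> bool" where
  "two_transitive P G \<longleftrightarrow>
     (\<forall>x\<in>P. \<forall>y\<in>P. \<forall>u\<in>P. \<forall>v\<in>P. x \<noteq> y \<longrightarrow> u \<noteq> v \<longrightarrow>
        (\<exists>g\<in>G. g x = u \<and> g y = v))"

definition block_transitive :: "'a set set \<Rightarrow> ('a \<Rightarrow> 'a) set \<Rightarrow> bool" where
  "block_transitive B G \<longleftrightarrow> (\<forall>L\<in>B. \<forall>M\<in>B. \<exists>g\<in>G. g ` L = M)"

definition flags :: "'a set set \<Rightarrow> ('a \<times> 'a set) set" where
  "flags B = {(\<sigma>, L). L \<in> B \<and> \<sigma> \<in> L}"

definition flag_orbit :: "('a \<Rightarrow> 'a) set \<Rightarrow> 'a \<times> 'a set \<Rightarrow> ('a \<times> 'a set) set" where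
  "flag_orbit G f = (\<lambda>g. (g (fst f), g ` (snd f))) ` G"

definition flag_orbits :: "'a set set \<Rightarrow> ('a \<Rightarrow> 'a) set \<Rightarrow> ('a \<times> 'a set) set set" where
  "flag_orbits B G = flag_orbit G ` flags B"

definition orbit_at :: "('a \<times> 'a set) set \<Rightarrow> 'a \<Rightarrow> ('a \<times> 'a set) set" where
  "orbit_at \<Omega> \<sigma> = {f \<in> \<Omega>. fst f = \<sigma>}"

definition flag_stab :: "('a \<Rightarrow> 'a) set \<Rightarrow> 'a \<Rightarrow> 'a set \<Rightarrow> ('a \<Rightarrow> 'a) set" where
  "flag_stab G \<sigma> L = {g \<in> G. g \<sigma> = \<sigma> \<and> g ` L = L}"

definition transitive_on :: "('a \<Rightarrow> 'a) set \<Rightarrow> 'a set \<Rightarrow> bool" where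
  "transitive_on H X \<longleftrightarrow> (\<forall>x\<in>X. \<forall>y\<in>X. \<exists>h\<in>H. h x = y)"

definition feasible :: "'a set \<Rightarrow> ('a \<Rightarrow> 'a) set \<Rightarrow> ('a \<times> 'a set) set \<Rightarrow> bool" where
  "feasible P G \<Omega> \<longleftrightarrow>
     (\<exists>\<sigma>\<in>P. card (orbit_at \<Omega> \<sigma>) \<ge> 2) \<and>
     (\<exists>\<sigma> L. (\<sigma>, L) \<in> \<Omega> \<and> transitive_on (flag_stab G \<sigma> L) (L - {\<sigma>}))"

end

theory Submission
  imports Defs
begin

lemma G_bij:
  assumes "subgroup G (BijGroup P)" "g \<in> G"
  shows "bij_betw g P P"
proof -
  have "g \<in> carrier (BijGroup P)" using assms subgroup.subset by blast
  then show ?thesis by (simp add: BijGroup_def Bij_def)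
qed

lemma G_comp:
  assumes "subgroup G (BijGroup P)" "g \<in> G" "k \<in> G"
  shows "compose P k g \<in> G"
proof -
  have cs: "carrier (BijGroup P) = Bij P" by (simp add: BijGroup_def)
  have c: "g \<in> Bij P" "k \<in> Bij P" using subgroup.subset[OF assms(1)] assms(2,3) cs by blast+
  have "k \<otimes>\<^bsub>BijGroup P\<^esub> g \<in> G" using subgroup.m_closed[OF assms(1) assms(3) assms(2)] .
  then show ?thesis using c by (simp add: BijGroup_def)
qed

lemma G_inv:
  assumes "subgroup G (BijGroup P)" "g \<in> G"
  shows "\<exists>g'\<in>G. \<forall>x\<in>P. g' (g x) = x \<and> g (g' x) = x"
proof -
  have cs: "carrier (BijGroup P) = Bij P" by (simp add: BijGroup_def)
  have c: "g \<in> Bij P" using subgroup.subset[OF assms(1)] assms(2) cs by blast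
  have "inv\<^bsub>BijGroup P\<^esub> g \<in> G" using subgroup.m_inv_closed[OF assms(1) assms(2)] .
  moreover have "inv\<^bsub>BijGroup P\<^esub> g = (\<lambda>x \<in> P. (inv_into P g) x)"
    using inv_BijGroup[OF c] .
  moreover have b: "bij_betw g P P" using assms G_bij by blast
  moreover have "\<forall>x\<in>P. (\<lambda>x \<in> P. (inv_into P g) x) (g x) = x \<and> g ((\<lambda>x \<in> P. (inv_into P g) x) x) = x"
  proof
    fix x assume x: "x \<in> P"
    have gx: "g x \<in> P" using bij_betwE[OF b] x by blast
    have "inv_into P g (g x) = x" using bij_betw_inv_into_left[OF b x] .
    moreover have "g (inv_into P g x) = x" using bij_betw_inv_into_right[OF b x] .
    ultimately show "(\<lambda>x \<in> P. (inv_into P g) x) (g x) = x \<and> g ((\<lambda>x \<in> P. (inv_into P g) x) x) = x"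
      using x gx by simp
  qed
  ultimately show ?thesis by metis
qed

lemma orb:
  assumes "subgroup G (BijGroup P)" "g \<in> G" "x \<in> P" "A \<subseteq> P"
  shows "flag_orbit G (g x, g ` A) = flag_orbit G (x, A)"
proof
  show "flag_orbit G (g x, g ` A) \<subseteq> flag_orbit G (x, A)"
  proof
    fix f assume "f \<in> flag_orbit G (g x, g ` A)"
    then obtain k where k: "k \<in> G" "f = (k (g x), k ` g ` A)"
      by (auto simp: flag_orbit_def)
    have "compose P k g \<in> G" using G_comp assms k by blast
    moreover have "compose P k g x = k (g x)" using assms by (simp add: compose_def)
    moreover have "compose P k g ` A = k ` g ` A"
    proof -
      have "k ` g ` A = (\<lambda>y. k (g y)) ` A" by (simp add: image_image)
      also have "\<dots> = compose P k g ` A" using assms by (intro image_cong) (auto simp: compose_def)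
      finally show ?thesis by simp
    qed
    ultimately have "f = (\<lambda>g. (g (fst (x, A)), g ` snd (x, A))) (compose P k g)" using k by simp
    then show "f \<in> flag_orbit G (x, A)" unfolding flag_orbit_def
      using \<open>compose P k g \<in> G\<close> by (rule image_eqI)
  qed
next
  show "flag_orbit G (x, A) \<subseteq> flag_orbit G (g x, g ` A)"
  proof
    fix f assume "f \<in> flag_orbit G (x, A)"
    then obtain k where k: "k \<in> G" "f = (k x, k ` A)"
      by (auto simp: flag_orbit_def)
    obtain g' where g': "g' \<in> G" "\<forall>x\<in>P. g' (g x) = x \<and> g (g' x) = x"
      using G_inv assms by blast
    have g'1: "g' (g y) = y" if "y \<in> P" for y using g'(2) that by blast
    have gP: "g y \<in> P" if "y \<in> P" for y
      using bij_betwE[OF G_bij[OF assms(1,2)]] that by blast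
    have "compose P k g' \<in> G" using G_comp[OF assms(1) g'(1) k(1)] .
    moreover have cp: "compose P k g' (g y) = k y" if "y \<in> P" for y
    proof -
      have "compose P k g' (g y) = k (g' (g y))" using gP[OF that] by (simp add: compose_def)
      then show ?thesis using g'1[OF that] by simp
    qed
    moreover have "compose P k g' ` g ` A = k ` A"
    proof -
      have "compose P k g' ` g ` A = (\<lambda>y. compose P k g' (g y)) ` A" by (simp add: image_image)
      also have "\<dots> = k ` A" using assms(4) cp by (intro image_cong) auto
      finally show ?thesis .
    qed
    ultimately have "f = (\<lambda>h. (h (fst (g x, g ` A)), h ` snd (g x, g ` A))) (compose P k g')"
      using k assms(3) by simp
    then show "f \<in> flag_orbit G (g x, g ` A)" unfolding flag_orbit_def
      using \<open>compose P k g' \<in> G\<close> by (rule image_eqI)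
  qed
qed

theorem lemma3p1:
  fixes P :: "'a set" and B :: "'a set set" and G :: "('a \<Rightarrow> 'a) set"
    and r lam :: nat
  assumes "two_design P B (r + 1) lam"
    and "r > 1"
    and "aut_group P B G"
    and "two_transitive P G"
    and "block_transitive B G"
  shows "\<forall>\<Omega>1\<in>flag_orbits B G. \<forall>\<Omega>2\<in>flag_orbits B G.
           feasible P G \<Omega>1 \<longrightarrow> feasible P G \<Omega>2 \<longrightarrow> \<Omega>1 = \<Omega>2"
proof (intro ballI impI)
  have sg: "subgroup G (BijGroup P)" and bl: "\<forall>g\<in>G. (\<lambda>L. g ` L) ` B = B"
    using assms(3) by (auto simp: aut_group_def)
  have BP: "\<And>L. L \<in> B \<Longrightarrow> L \<subseteq> P \<and> card L = r + 1"
    using assms(1) by (auto simp: two_design_def)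
  have gB: "\<And>g L. g \<in> G \<Longrightarrow> L \<in> B \<Longrightarrow> g ` L \<in> B" using bl by blast
  have key: "\<exists>\<sigma> L. \<sigma> \<in> L \<and> L \<in> B \<and> \<Omega> = flag_orbit G (\<sigma>, L) \<and>
      transitive_on (flag_stab G \<sigma> L) (L - {\<sigma>})"
    if om: "\<Omega> \<in> flag_orbits B G" and fe: "feasible P G \<Omega>" for \<Omega>
  proof -
    obtain a A where aA: "a \<in> A" "A \<in> B" "\<Omega> = flag_orbit G (a, A)"
    proof -
      obtain f where f: "f \<in> flags B" "\<Omega> = flag_orbit G f"
        using om unfolding flag_orbits_def by blast
      obtain a A where "f = (a, A)" by (cases f)
      then show ?thesis using f that by (auto simp: flags_def)
    qed
    obtain \<sigma> L where sL: "(\<sigma>, L) \<in> \<Omega>" "transitive_on (flag_stab G \<sigma> L) (L - {\<sigma>})"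
      using fe by (auto simp: feasible_def)
    then obtain g where g: "g \<in> G" "\<sigma> = g a" "L = g ` A"
      using aA by (auto simp: flag_orbit_def)
    have "\<Omega> = flag_orbit G (\<sigma>, L)" using orb[OF sg g(1)] aA BP g by blast
    moreover have "\<sigma> \<in> L" "L \<in> B" using g aA gB by auto
    ultimately show ?thesis using sL by blast
  qed
  fix \<Omega>1 \<Omega>2 assume a: "\<Omega>1 \<in> flag_orbits B G" "\<Omega>2 \<in> flag_orbits B G"
    "feasible P G \<Omega>1" "feasible P G \<Omega>2"
  obtain \<sigma>1 L1 where 1: "\<sigma>1 \<in> L1" "L1 \<in> B" "\<Omega>1 = flag_orbit G (\<sigma>1, L1)"
      "transitive_on (flag_stab G \<sigma>1 L1) (L1 - {\<sigma>1})"
    using key a by blast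
  obtain \<sigma>2 L2 where 2: "\<sigma>2 \<in> L2" "L2 \<in> B" "\<Omega>2 = flag_orbit G (\<sigma>2, L2)"
      "transitive_on (flag_stab G \<sigma>2 L2) (L2 - {\<sigma>2})"
    using key a by blast
  have L1P: "L1 \<subseteq> P" and L2P: "L2 \<subseteq> P" using BP 1 2 by auto
  obtain h where h: "h \<in> G" "h ` L1 = L2" using assms(5) 1(2) 2(2) unfolding block_transitive_def by blast
  define \<tau> where "\<tau> = h \<sigma>1"
  have \<tau>L: "\<tau> \<in> L2" using h 1 \<tau>_def by blast
  have e1: "\<Omega>1 = flag_orbit G (\<tau>, L2)" using orb[OF sg h(1)] 1 L1P h \<tau>_def by auto
  show "\<Omega>1 = \<Omega>2"
  proof (cases "\<tau> = \<sigma>2")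
    case True then show ?thesis using e1 2 by simp
  next
    case False
    have "\<not> L2 \<subseteq> {\<sigma>2, \<tau>}"
    proof
      assume "L2 \<subseteq> {\<sigma>2, \<tau>}"
      then have "card L2 \<le> card {\<sigma>2, \<tau>}" by (intro card_mono) auto
      also have "\<dots> \<le> 2" by (simp add: card_insert_le_m1)
      finally show False using BP 2 assms(2) by auto
    qed
    then obtain \<mu> where \<mu>: "\<mu> \<in> L2" "\<mu> \<noteq> \<sigma>2" "\<mu> \<noteq> \<tau>" by blast
    obtain k2 where k2: "k2 \<in> G" "k2 \<sigma>2 = \<sigma>2" "k2 ` L2 = L2" "k2 \<tau> = \<mu>"
    proof -
      have "\<tau> \<in> L2 - {\<sigma>2}" "\<mu> \<in> L2 - {\<sigma>2}" using \<mu> \<tau>L False by auto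
      then obtain k where "k \<in> flag_stab G \<sigma>2 L2" "k \<tau> = \<mu>"
        using 2(4) unfolding transitive_on_def by blast
      then show ?thesis using that unfolding flag_stab_def by blast
    qed
    have e2: "flag_orbit G (\<tau>, L2) = flag_orbit G (\<mu>, L2)"
      using orb[OF sg k2(1), of \<tau> L2] k2 \<tau>L L2P by auto
    obtain h' where h': "h' \<in> G" "\<forall>x\<in>P. h' (h x) = x \<and> h (h' x) = x"
      using G_inv[OF sg h(1)] by blast
    have hh1: "h' (h y) = y" if "y \<in> P" for y using h'(2) that by blast
    have hh2: "h (h' y) = y" if "y \<in> P" for y using h'(2) that by blast
    have h'L: "h' ` L2 = L1"
    proof -
      have "h' ` L2 = h' ` (h ` L1)" using h(2) by simp
      also have "\<dots> = (\<lambda>x. h' (h x)) ` L1" by (rule image_image)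
      also have "\<dots> = (\<lambda>x. x) ` L1" using hh1 L1P by (intro image_cong) auto
      finally show ?thesis by simp
    qed
    define \<nu> where "\<nu> = h' \<mu>"
    define \<rho> where "\<rho> = h' \<sigma>2"
    have e3: "flag_orbit G (\<mu>, L2) = flag_orbit G (\<nu>, L1)"
      using orb[OF sg h'(1), of \<mu> L2] h'L \<mu> L2P \<nu>_def by auto
    have \<mu>P: "\<mu> \<in> P" and s2P: "\<sigma>2 \<in> P" using \<mu>(1) 2(1) L2P by auto
    have \<nu>L: "\<nu> \<in> L1 - {\<sigma>1}"
    proof
      show "\<nu> \<in> L1" using \<nu>_def h'L \<mu>(1) by blast
      show "\<nu> \<notin> {\<sigma>1}"
      proof
        assume "\<nu> \<in> {\<sigma>1}"
        then have "h \<nu> = \<tau>" using \<tau>_def by simp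
        moreover have "h \<nu> = \<mu>" using \<nu>_def hh2[OF \<mu>P] by simp
        ultimately show False using \<mu>(3) by simp
      qed
    qed
    have \<rho>L: "\<rho> \<in> L1 - {\<sigma>1}"
    proof
      show "\<rho> \<in> L1" using \<rho>_def h'L 2(1) by blast
      show "\<rho> \<notin> {\<sigma>1}"
      proof
        assume "\<rho> \<in> {\<sigma>1}"
        then have "h \<rho> = \<tau>" using \<tau>_def by simp
        moreover have "h \<rho> = \<sigma>2" using \<rho>_def hh2[OF s2P] by simp
        ultimately show False using False by simp
      qed
    qed
    obtain k1 where k1: "k1 \<in> G" "k1 \<sigma>1 = \<sigma>1" "k1 ` L1 = L1" "k1 \<nu> = \<rho>"
    proof -
      obtain k where "k \<in> flag_stab G \<sigma>1 L1" "k \<nu> = \<rho>"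
        using 1(4) \<nu>L \<rho>L unfolding transitive_on_def by blast
      then show ?thesis using that unfolding flag_stab_def by blast
    qed
    have e4: "flag_orbit G (\<nu>, L1) = flag_orbit G (\<rho>, L1)"
      using orb[OF sg k1(1) _ L1P, of \<nu>] k1(3,4) \<nu>L L1P by auto
    have e5: "flag_orbit G (\<rho>, L1) = flag_orbit G (\<sigma>2, L2)"
    proof -
      have "h \<rho> = \<sigma>2" using \<rho>_def hh2[OF s2P] by simp
      moreover have "\<rho> \<in> P" using \<rho>L L1P by blast
      ultimately show ?thesis using orb[OF sg h(1) _ L1P, of \<rho>] h(2) by simp
    qed
    show ?thesis using e1 e2 e3 e4 e5 2 by simp
  qed
qed

end
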